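(* Let $X$ be a topological space and $\{X_\alpha\}_{\alpha\in I}$ a family of subspaces of $X$, each of which is dense-connected. Suppose that for every non-empty open subset $U$ of $X$, either $U\cap\bigcup_{\alpha\in I}X_\alpha=\emptyset$ or $U\cap X_\alpha\neq\emptyset$ for every $\alpha\in I$. Then $\bigcup_{\alpha\in I}X_\alpha$ is dense-connected.
   Context: A space $X$ is dense-connected if every dense subset of $X$ (with the subspace topology) is connected. *)

theory Defs
  imports "HOL-Analysis.Analysis"
begin

definition dense_connected :: "'a topology \<Rightarrow> bool" where
  "dense_connected X \<longleftrightarrow>
     (\<forall>D. D \<subseteq> topspace X \<and> X closure_of D = topspace X \<longrightarrow> connected_space (subtopology X D))"

end

theory Submission
  imports Defs
begin

theorem mainTheorem12:
  fixes X :: "'a topology" and I :: "'i set" and S :: "'i \<Rightarrow> 'a set"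
  assumes sub: "\<forall>\<alpha>\<in>I. S \<alpha> \<subseteq> topspace X"
    and dc: "\<forall>\<alpha>\<in>I. dense_connected (subtopology X (S \<alpha>))"
    and opn: "\<forall>U. openin X U \<and> U \<noteq> {} \<longrightarrow>
                 U \<inter> (\<Union>\<alpha>\<in>I. S \<alpha>) = {} \<or> (\<forall>\<alpha>\<in>I. U \<inter> S \<alpha> \<noteq> {})"
  shows "dense_connected (subtopology X (\<Union>\<alpha>\<in>I. S \<alpha>))"
  unfolding dense_connected_def
proof (intro allI impI)
  define Y where "Y = (\<Union>\<alpha>\<in>I. S \<alpha>)"
  have Ysub: "Y \<subseteq> topspace X" using sub Y_def by blast
  fix D assume D: "D \<subseteq> topspace (subtopology X (\<Union>\<alpha>\<in>I. S \<alpha>)) \<and>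
     subtopology X (\<Union>\<alpha>\<in>I. S \<alpha>) closure_of D = topspace (subtopology X (\<Union>\<alpha>\<in>I. S \<alpha>))"
  have DY: "D \<subseteq> Y" using D Y_def by auto
  have cl: "Y \<inter> X closure_of (Y \<inter> D) = Y"
    using D Ysub unfolding Y_def[symmetric] closure_of_subtopology by auto
  have dens: "W \<inter> D \<noteq> {}" if W1: "openin X W" and W2: "W \<inter> Y \<noteq> {}" for W
  proof -
    obtain y where "y \<in> W" "y \<in> Y" using W2 by blast
    then have "y \<in> X closure_of (Y \<inter> D)" using cl by blast
    then show ?thesis using W1 \<open>y \<in> W\<close> by (auto simp: in_closure_of)
  qed
  have "connectedin X D"
    unfolding connectedin
  proof (intro conjI notI)
    show "D \<subseteq> topspace X" using DY Ysub by blast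
  next
    assume "\<exists>U V. openin X U \<and> openin X V \<and> D \<subseteq> U \<union> V \<and> U \<inter> V \<inter> D = {} \<and> U \<inter> D \<noteq> {} \<and> V \<inter> D \<noteq> {}"
    then obtain U V where U: "openin X U" and V: "openin X V" and cov: "D \<subseteq> U \<union> V"
      and dis: "U \<inter> V \<inter> D = {}" and ne1: "U \<inter> D \<noteq> {}" and ne2: "V \<inter> D \<noteq> {}" by blast
    have UVY: "U \<inter> V \<inter> Y = {}"
      using dens[of "U \<inter> V"] U V dis by blast
    have UY: "U \<inter> Y \<noteq> {}" and VY: "V \<inter> Y \<noteq> {}" using ne1 ne2 DY by auto
    then obtain \<alpha> where a: "\<alpha> \<in> I" using Y_def by blast
    have Ua: "U \<inter> S \<alpha> \<noteq> {}" using opn U UY a Y_def by blast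
    have Va: "V \<inter> S \<alpha> \<noteq> {}" using opn V VY a Y_def by blast
    define E where "E = S \<alpha> \<inter> (U \<union> V)"
    have Ssub: "S \<alpha> \<subseteq> topspace X" using sub a by blast
    have "S \<alpha> \<subseteq> X closure_of E"
    proof
      fix x assume x: "x \<in> S \<alpha>"
      show "x \<in> X closure_of E"
        unfolding in_closure_of
      proof (intro conjI allI impI)
        show "x \<in> topspace X" using x Ssub by blast
        fix T assume T: "x \<in> T \<and> openin X T"
        have "T \<inter> Y \<noteq> {}" using T x a Y_def by blast
        then have "T \<inter> D \<noteq> {}" using dens T by blast
        then have "T \<inter> (U \<union> V) \<inter> Y \<noteq> {}" using cov DY by blast
        moreover have "openin X (T \<inter> (U \<union> V))" using T U V by auto
        ultimately have "T \<inter> (U \<union> V) \<inter> S \<alpha> \<noteq> {}" using opn a Y_def by blast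
        then show "\<exists>y. y \<in> E \<and> y \<in> T" unfolding E_def by blast
      qed
    qed
    then have "subtopology X (S \<alpha>) closure_of E = topspace (subtopology X (S \<alpha>))"
      using Ssub unfolding closure_of_subtopology E_def
      by (auto simp: Int_absorb1)
    moreover have "E \<subseteq> topspace (subtopology X (S \<alpha>))" using Ssub E_def by auto
    ultimately have "connected_space (subtopology (subtopology X (S \<alpha>)) E)"
      using dc a unfolding dense_connected_def by blast
    then have "connectedin X E"
      unfolding connectedin_def subtopology_subtopology using Ssub E_def
      by (auto simp: Int_absorb1 inf.absorb_iff2)
    moreover have "U \<inter> V \<inter> E = {}" using UVY a Y_def E_def by blast
    ultimately show False
      using connectedinD[of X E U V] U V Ua Va E_def by blast
  qed
  then show "connected_space (subtopology (subtopology X (\<Union>\<alpha>\<in>I. S \<alpha>)) D)"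
    unfolding subtopology_subtopology Y_def[symmetric]
    using DY by (simp add: connectedin_def Int_absorb1)
qed

end
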